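(* Let $\mathcal{C}$ be a finite set and $\mathcal{T}$ a finite set, and let $(Y,T)$ be a pair of random variables with joint distribution $P_{Y,T}$ on $\mathcal{C}\times\mathcal{T}$, where $P_Y(y)>0$ for every $y\in\mathcal{C}$. For a nonempty subset $A\subseteq\mathcal{C}$ let $P_{T|Y\in A}$ denote the conditional distribution of $T$ given the event $\{Y\in A\}$, and for $y\in\mathcal{C}$ let $P_{T|Y=y}$ denote the conditional distribution of $T$ given $\{Y=y\}$. Then $$\max_{\emptyset\neq A\subseteq \mathcal{C}} D\big(P_{T|Y\in A}\,\big\|\,P_{T}\big) \;=\; \max_{y\in \mathcal{C}} D\big(P_{T|Y=y}\,\big\|\,P_{T}\big),$$ where $P_T$ is the marginal distribution of $T$ and $D(\cdot\|\cdot)$ is the Kullback–Leibler divergence.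
   Context: $D(P\|Q)=\sum_{t\in\mathcal{T}}P(t)\log\frac{P(t)}{Q(t)}$ (with the conventions $0\log\frac{0}{q}=0$). In the paper, $Y$ is a class label and $T$ is the quantized output of a neuron of a neural network; the quantity $\max_{y} D(P_{T|Y=y}\|P_T)$ is called the Kullback–Leibler selectivity of the neuron. *)

theory Defs
  imports "HOL-Probability.Probability"
begin

definition KL_div :: "'a::finite pmf \<Rightarrow> 'a pmf \<Rightarrow> real" where
  "KL_div p q = (\<Sum>t\<in>UNIV. if pmf p t = 0 then 0 else pmf p t * ln (pmf p t / pmf q t))"

definition cond_T_given_Y_in :: "('c \<times> 't) pmf \<Rightarrow> 'c set \<Rightarrow> 't pmf" where
  "cond_T_given_Y_in PYT A = map_pmf snd (cond_pmf PYT {z. fst z \<in> A})"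

end

theory Submission imports Defs begin

lemma xlnx_tangent:
  fixes x p :: real assumes "x \<ge> 0" "p > 0"
  shows "x * ln p + (x - p) \<le> x * ln x"
proof (cases "x = 0")
  case True then show ?thesis using assms by simp
next
  case False
  hence x: "x > 0" using assms by simp
  have "ln (p / x) \<le> p / x - 1" using ln_le_minus_one[of "p/x"] x assms by simp
  hence "x * ln (p/x) \<le> x * (p/x - 1)" using x by (simp add: mult_left_mono)
  moreover have "x * (p/x - 1) = p - x" using x by (simp add: field_simps)
  moreover have "ln (p/x) = ln p - ln x" using x assms by (simp add: ln_div)
  ultimately show ?thesis by (simp add: algebra_simps)
qed

lemma jensen_xlnx:
  fixes w c :: "'i \<Rightarrow> real"
  assumes S: "finite S" and w: "\<And>i. i \<in> S \<Longrightarrow> w i \<ge> 0" and c: "\<And>i. i \<in> S \<Longrightarrow> c i \<ge> 0"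
    and sw: "(\<Sum>i\<in>S. w i) = 1"
  shows "(\<Sum>i\<in>S. w i * c i) * ln (\<Sum>i\<in>S. w i * c i) \<le> (\<Sum>i\<in>S. w i * (c i * ln (c i)))"
proof -
  define p where "p = (\<Sum>i\<in>S. w i * c i)"
  have p0: "p \<ge> 0" unfolding p_def using w c by (simp add: sum_nonneg)
  show ?thesis
  proof (cases "p = 0")
    case True
    have "\<forall>i\<in>S. w i * c i = 0"
      using True S w c unfolding p_def by (subst sum_nonneg_eq_0_iff[symmetric]) auto
    hence "(\<Sum>i\<in>S. w i * (c i * ln (c i))) = 0"
      by (intro sum.neutral) (metis mult.assoc mult_zero_left)
    then show ?thesis using True unfolding p_def[symmetric] by simp
  next
    case False
    hence pp: "p > 0" using p0 by simp
    have "(\<Sum>i\<in>S. w i * (c i * ln p + (c i - p))) \<le> (\<Sum>i\<in>S. w i * (c i * ln (c i)))"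
      by (rule sum_mono, rule mult_left_mono, rule xlnx_tangent) (use c w pp in auto)
    moreover have "(\<Sum>i\<in>S. w i * (c i * ln p + (c i - p))) = (\<Sum>i\<in>S. w i * c i) * ln p + ((\<Sum>i\<in>S. w i * c i) - p * (\<Sum>i\<in>S. w i))"
      by (simp add: algebra_simps sum.distrib sum_distrib_left sum_distrib_right sum_subtractf)
    ultimately show ?thesis using sw unfolding p_def[symmetric] by simp
  qed
qed

lemma KL_alt:
  fixes p q :: "'a::finite pmf"
  assumes "\<And>t. pmf p t > 0 \<Longrightarrow> pmf q t > 0"
  shows "KL_div p q = (\<Sum>t\<in>UNIV. pmf p t * ln (pmf p t) - pmf p t * ln (pmf q t))"
  unfolding KL_div_def
proof (rule sum.cong[OF refl])
  fix t
  show "(if pmf p t = 0 then 0 else pmf p t * ln (pmf p t / pmf q t)) =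
        pmf p t * ln (pmf p t) - pmf p t * ln (pmf q t)"
  proof (cases "pmf p t = 0")
    case False
    hence "pmf p t > 0" using pmf_nonneg[of p t] by linarith
    with assms[OF this] show ?thesis by (simp add: ln_div algebra_simps)
  qed simp
qed

lemma pmf_fst:
  fixes P :: "('c::finite \<times> 't::finite) pmf"
  shows "pmf (map_pmf fst P) y = (\<Sum>t\<in>UNIV. pmf P (y,t))"
proof -
  have "pmf (map_pmf fst P) y = (\<Sum>z\<in>fst -` {y}. pmf P z)"
    by (simp add: pmf_map measure_measure_pmf_finite)
  also have "fst -` {y} = Pair y ` (UNIV :: 't set)" by auto
  also have "(\<Sum>z\<in>Pair y ` (UNIV :: 't set). pmf P z) = (\<Sum>t\<in>UNIV. pmf P (y,t))"
    by (subst sum.reindex) (auto simp: inj_on_def)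
  finally show ?thesis .
qed

lemma pmf_snd:
  fixes P :: "('c::finite \<times> 't::finite) pmf"
  shows "pmf (map_pmf snd P) t = (\<Sum>y\<in>UNIV. pmf P (y,t))"
proof -
  have "pmf (map_pmf snd P) t = (\<Sum>z\<in>snd -` {t}. pmf P z)"
    by (simp add: pmf_map measure_measure_pmf_finite)
  also have "snd -` {t} = (\<lambda>y. (y,t)) ` (UNIV :: 'c set)" by auto
  also have "(\<Sum>z\<in>(\<lambda>y. (y,t)) ` (UNIV :: 'c set). pmf P z) = (\<Sum>y\<in>UNIV. pmf P (y,t))"
    by (subst sum.reindex) (auto simp: inj_on_def)
  finally show ?thesis .
qed

lemma pmf_cond_T:
  fixes P :: "('c::finite \<times> 't::finite) pmf"
  assumes pos: "\<forall>y. pmf (map_pmf fst P) y > 0" and A: "A \<noteq> {}"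
  shows "pmf (cond_T_given_Y_in P A) t = (\<Sum>y\<in>A. pmf P (y,t)) / (\<Sum>y\<in>A. pmf (map_pmf fst P) y)"
proof -
  define S :: "('c \<times> 't) set" where "S = {z. fst z \<in> A}"
  obtain y0 where y0: "y0 \<in> A" using A by auto
  have "0 < (\<Sum>t\<in>UNIV. pmf P (y0,t))" using pos pmf_fst by metis
  then obtain t0 where "pmf P (y0,t0) \<noteq> 0"
    by (metis (no_types, lifting) less_irrefl sum.neutral)
  hence ne: "set_pmf P \<inter> S \<noteq> {}" using y0 unfolding S_def by (auto simp: set_pmf_iff)
  have mS: "measure P S = (\<Sum>y\<in>A. pmf (map_pmf fst P) y)"
  proof -
    have SA: "S = A \<times> UNIV" unfolding S_def by auto
    have "measure P S = (\<Sum>z\<in>A \<times> UNIV. pmf P z)" unfolding SA by (simp add: measure_measure_pmf_finite)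
    also have "(\<Sum>z\<in>A \<times> UNIV. pmf P z) = (\<Sum>y\<in>A. \<Sum>t\<in>UNIV. pmf P (y,t))"
      by (simp add: sum.cartesian_product)
    finally show ?thesis by (simp add: pmf_fst)
  qed
  have "pmf (cond_T_given_Y_in P A) t = (\<Sum>z\<in>snd -` {t}. pmf (cond_pmf P S) z)"
    unfolding cond_T_given_Y_in_def S_def[symmetric]
    by (simp add: pmf_map measure_measure_pmf_finite)
  also have "\<dots> = (\<Sum>z\<in>snd -` {t}. if z \<in> S then pmf P z / measure P S else 0)"
    using pmf_cond[OF ne] by simp
  also have "\<dots> = (\<Sum>z\<in>snd -` {t} \<inter> S. pmf P z / measure P S)"
    by (simp add: sum.inter_restrict)
  also have "snd -` {t} \<inter> S = (\<lambda>y. (y,t)) ` A" unfolding S_def by auto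
  also have "(\<Sum>z\<in>(\<lambda>y. (y,t)) ` A. pmf P z / measure P S) = (\<Sum>y\<in>A. pmf P (y,t)) / measure P S"
    by (subst sum.reindex) (auto simp: inj_on_def sum_divide_distrib)
  finally show ?thesis using mS by simp
qed


theorem lemma1:
  fixes PYT :: "('c::finite \<times> 't::finite) pmf"
  assumes "\<forall>y. pmf (map_pmf fst PYT) y > 0"
  shows "Max {KL_div (cond_T_given_Y_in PYT A) (map_pmf snd PYT) | A. A \<noteq> {}}
       = Max ((\<lambda>y. KL_div (cond_T_given_Y_in PYT {y}) (map_pmf snd PYT)) ` UNIV)"
proof -
  note pos = assms
  define Q where "Q = map_pmf snd PYT"
  define K where "K A = KL_div (cond_T_given_Y_in PYT A) Q" for A
  define py where "py y = pmf (map_pmf fst PYT) y" for y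
  define j where "j y t = pmf PYT (y,t)" for y t
  define M where "M = Max ((\<lambda>y. K {y}) ` UNIV)"
  have py_pos: "py y > 0" for y using pos py_def by simp
  have j0: "j y t \<ge> 0" for y t unfolding j_def by simp
  have cA: "pmf (cond_T_given_Y_in PYT A) t = (\<Sum>y\<in>A. j y t) / (\<Sum>y\<in>A. py y)" if "A \<noteq> {}" for A t
    using pmf_cond_T[OF pos that] unfolding j_def py_def by simp
  have PA: "(\<Sum>y\<in>A. py y) > 0" if "A \<noteq> {}" for A
    using that py_pos by (simp add: sum_pos)
  have qpos: "pmf Q t > 0" if "A \<noteq> {}" "pmf (cond_T_given_Y_in PYT A) t > 0" for A t
  proof -
    have "(\<Sum>y\<in>A. j y t) > 0"
      using that cA[OF that(1)] PA[OF that(1)] by (simp add: zero_less_divide_iff)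
    then obtain y where "j y t > 0"
      by (metis (no_types, lifting) less_irrefl sum.neutral j0 order.not_eq_order_implies_strict)
    moreover have "j y t \<le> (\<Sum>y\<in>UNIV. j y t)" by (rule member_le_sum) (auto simp: j0)
    ultimately show ?thesis unfolding Q_def pmf_snd j_def by simp
  qed
  have Kalt: "K A = (\<Sum>t\<in>UNIV. pmf (cond_T_given_Y_in PYT A) t * ln (pmf (cond_T_given_Y_in PYT A) t)
                 - pmf (cond_T_given_Y_in PYT A) t * ln (pmf Q t))" if "A \<noteq> {}" for A
    unfolding K_def by (rule KL_alt) (use qpos that in blast)
  define c where "c y t = pmf (cond_T_given_Y_in PYT {y}) t" for y t
  have c0: "c y t \<ge> 0" for y t unfolding c_def by simp
  have KM: "K {y} \<le> M" for y unfolding M_def by (rule Max_ge) auto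
  have key: "K A \<le> M" if A: "A \<noteq> {}" for A
  proof -
    define P where "P = (\<Sum>y\<in>A. py y)"
    have P: "P > 0" using PA[OF A] P_def by simp
    define w where "w y = py y / P" for y
    have w0: "w y \<ge> 0" for y unfolding w_def using P py_pos[of y] by simp
    have sw: "(\<Sum>y\<in>A. w y) = 1" unfolding w_def using P by (simp add: P_def sum_divide_distrib[symmetric])
    have cy: "c y t = j y t / py y" for y t unfolding c_def using cA[of "{y}"] by simp
    have mix: "pmf (cond_T_given_Y_in PYT A) t = (\<Sum>y\<in>A. w y * c y t)" for t
    proof -
      have "(\<Sum>y\<in>A. w y * c y t) = (\<Sum>y\<in>A. j y t / P)"
        by (rule sum.cong) (use py_pos in \<open>auto simp: w_def cy less_irrefl\<close>, metis less_irrefl)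
      then show ?thesis using cA[OF A] by (simp add: P_def sum_divide_distrib)
    qed
    have "K A = (\<Sum>t\<in>UNIV. (\<Sum>y\<in>A. w y * c y t) * ln (\<Sum>y\<in>A. w y * c y t)
                 - (\<Sum>y\<in>A. w y * c y t) * ln (pmf Q t))"
      using Kalt[OF A] mix by simp
    also have "\<dots> \<le> (\<Sum>t\<in>UNIV. \<Sum>y\<in>A. w y * (c y t * ln (c y t) - c y t * ln (pmf Q t)))"
    proof (rule sum_mono)
      fix t :: 't
      have "(\<Sum>y\<in>A. w y * c y t) * ln (\<Sum>y\<in>A. w y * c y t) \<le> (\<Sum>y\<in>A. w y * (c y t * ln (c y t)))"
        by (rule jensen_xlnx) (use w0 c0 sw in auto)
      moreover have "(\<Sum>y\<in>A. w y * (c y t * ln (c y t) - c y t * ln (pmf Q t))) =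
          (\<Sum>y\<in>A. w y * (c y t * ln (c y t))) - (\<Sum>y\<in>A. w y * c y t) * ln (pmf Q t)"
        by (simp add: right_diff_distrib sum_subtractf sum_distrib_right mult.assoc)
      ultimately show "(\<Sum>y\<in>A. w y * c y t) * ln (\<Sum>y\<in>A. w y * c y t)
                 - (\<Sum>y\<in>A. w y * c y t) * ln (pmf Q t) \<le> (\<Sum>y\<in>A. w y * (c y t * ln (c y t) - c y t * ln (pmf Q t)))"
        by linarith
    qed
    also have "\<dots> = (\<Sum>y\<in>A. w y * (\<Sum>t\<in>UNIV. c y t * ln (c y t) - c y t * ln (pmf Q t)))"
      by (subst sum.swap) (simp add: sum_distrib_left)
    also have "\<dots> = (\<Sum>y\<in>A. w y * K {y})"
      by (rule sum.cong) (auto simp: Kalt c_def)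
    also have "\<dots> \<le> (\<Sum>y\<in>A. w y * M)"
      by (rule sum_mono, rule mult_left_mono) (use KM w0 in auto)
    also have "\<dots> = M" using sw by (simp add: sum_distrib_right[symmetric])
    finally show ?thesis .
  qed
  have Seq: "{KL_div (cond_T_given_Y_in PYT A) (map_pmf snd PYT) | A. A \<noteq> {}} = K ` {A. A \<noteq> {}}"
    unfolding K_def Q_def by auto
  have fin: "finite (K ` {A. A \<noteq> {}})" by simp
  have "Max (K ` {A. A \<noteq> {}}) = M"
  proof (rule antisym)
    show "Max (K ` {A. A \<noteq> {}}) \<le> M"
      by (rule Max.boundedI) (use fin key in auto)
  next
    have "M \<in> (\<lambda>y. K {y}) ` UNIV" unfolding M_def by (rule Max_in) auto
    then obtain y where "M = K {y}" by auto
    then show "M \<le> Max (K ` {A. A \<noteq> {}})" using fin by (intro Max_ge) auto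
  qed
  then show ?thesis unfolding Seq M_def K_def Q_def .
qed

end
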